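(* Assume $\mathfrak I$ is compact and $\psi$ is as below. Then for all $n\ge0$ and $1\le k,l\le n+1$, $$\sum_{i\ge0}\Psi^{n,n+1}_{n+1-k}(i)\,\mathcal E^{n,n+1}_{n+1-l}(i)=\delta_{k,l},$$ and for all $n\ge1$ and $1\le k,l\le n$, $$\sum_{i\ge0}\Psi^{n,n}_{n-k}(i)\,\mathcal E^{n,n}_{n-l}(i)=\delta_{k,l}.$$
   Context: Let $\lambda_k=\lambda(k)>0$ ($k\ge0$) and $\mu_k=\mu(k)$ with $\mu_0=0$, $\mu_k>0$ ($k\ge1$) be the rates of a birth and death chain on $\mathbb N=\{0,1,\dots\}$ reflecting at $0$, with $\pi_0=1$, $\pi_k=\prod_{i=1}^k\lambda_{i-1}/\mu_i$, and satisfying $\sum_{j\ge0}\frac{1}{\lambda_j\pi_j}\sum_{i=0}^{j}\pi_i=\sum_{j\ge0}\frac{1}{\lambda_j\pi_j}\sum_{i>j}\pi_i=\infty$. Dual rates: $\hat\lambda_k=\mu_{k+1}$, $\hat\mu_k=\lambda_k$; $\hat\pi_0=1$, $\hat\pi_k=\prod_{i=1}^k\mu_i/\lambda_i$. Polynomials $Q_n,\hat Q_n$ (degree $n$) are defined by $Q_{-1}=\hat Q_{-1}=0$, $Q_0=\hat Q_0=1$ and, for $n\ge0$, $-xQ_n(x)=\mu_nQ_{n-1}(x)-(\lambda_n+\mu_n)Q_n(x)+\lambda_nQ_{n+1}(x)$ and $-x\hat Q_n(x)=\lambda_n\hat Q_{n-1}(x)-(\mu_{n+1}+\lambda_n)\hat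 Q_n(x)+\mu_{n+1}\hat Q_{n+1}(x)$. Assume both associated moment problems are determinate: there are unique probability measures $\mathfrak w,\hat{\mathfrak w}$ on $[0,\infty)$ with $\int Q_iQ_j\,d\mathfrak w=\delta_{ij}/\pi_j$ and $\int\hat Q_i\hat Q_j\,d\hat{\mathfrak w}=\delta_{ij}/\hat\pi_j$; then $d\hat{\mathfrak w}(x)=x\,d\mathfrak w(x)/\lambda_0$ and both measures have the same support $\mathfrak I=[I^-,I^+]\subset[0,\infty]$. Write $\langle f,g\rangle_{\mathsf m}=\int f(x)g(x)\,d\mathsf m(x)$. Let $C=\sup_i(\lambda_i+\mu_i)$, $\hat C=\sup_i(\hat\lambda_i+\hat\mu_i)$ (finite) and $\psi(x)=\prod_{i=1}^{\mathfrak N}(1-\alpha_ix)e^{-tx}$ with $\mathfrak N\in\mathbb N$, $t\ge0$, $\frac12\min(1/C,1/\hat C)\ge\alpha_1\ge\dots\ge\alpha_{\mathfrak N}\ge0$. $\mathsf C(\mathfrak I)$ is a positively oriented simple closed contour enclosing $[0,I^+]$ and no zero of $\psi$. For $i\in\mathbb N$ and $1\le j\le n+1$ (resp. $1\le j\le n$): $\Psi^{n,n+1}_{n+1-j}(i)=\langle\pi_iQ_i,(-x)^{n+1-j}\psi\rangle_{\mathfrak w}$, $\Psi^{n,n}_{n-j}(i)=\langle\hat\pi_i\hat Q_i,(-x)^{n-j}\psi\rangle_{\hat{\mathfrak w}}$, $\mathcal E^{n,n+1}_{n+1-j}(i)=-\frac1{2\pi\mathrm i}\oint_{\mathsf C(\mathfrak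 I)}\frac{Q_i(u)}{\psi(u)(-u)^{n+2-j}}du$, $\mathcal E^{n,n}_{n-j}(i)=-\frac1{2\pi\mathrm i}\oint_{\mathsf C(\mathfrak I)}\frac{\hat Q_i(u)}{\psi(u)(-u)^{n-j+1}}du$. *)

theory Defs
  imports "HOL-Analysis.Analysis" "HOL-Probability.Probability"
begin

definition has_cint :: "(complex \<Rightarrow> complex) \<Rightarrow> complex \<Rightarrow> (real \<Rightarrow> complex) \<Rightarrow> bool" where
  "has_cint f i g \<longleftrightarrow>
     ((\<lambda>x. f (g x) * vector_derivative g (at x within {0..1})) has_integral i) {0..1}"

definition cint :: "(real \<Rightarrow> complex) \<Rightarrow> (complex \<Rightarrow> complex) \<Rightarrow> complex" where
  "cint g f = (SOME i. has_cint f i g \<or> (\<not> (\<exists>j. has_cint f j g) \<and> i = 0))"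

text \<open>Positively oriented simple closed contour (valid, i.e. piecewise C1):
  every point enclosed by the curve has winding number +1.\<close>

definition pos_simple_closed_contour :: "(real \<Rightarrow> complex) \<Rightarrow> bool" where
  "pos_simple_closed_contour g \<longleftrightarrow>
     valid_path g \<and> simple_path g \<and> pathfinish g = pathstart g \<and>
     (\<forall>z \<in> inside (path_image g). cint g (\<lambda>w. 1 / (w - z)) = 2 * of_real pi * \<i>)"

definition bd_pi :: "(nat \<Rightarrow> real) \<Rightarrow> (nat \<Rightarrow> real) \<Rightarrow> nat \<Rightarrow> real" where
  "bd_pi lam mu k = (\<Prod>i = 1..k. lam (i - 1) / mu i)"

fun bdQ :: "(nat \<Rightarrow> real) \<Rightarrow> (nat \<Rightarrow> real) \<Rightarrow> nat \<Rightarrow> 'a::real_field \<Rightarrow> 'a" where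
  "bdQ lam mu 0 x = 1"
| "bdQ lam mu (Suc 0) x = (of_real (lam 0 + mu 0) - x) / of_real (lam 0)"
| "bdQ lam mu (Suc (Suc n)) x =
     ((of_real (lam (Suc n) + mu (Suc n)) - x) * bdQ lam mu (Suc n) x
       - of_real (mu (Suc n)) * bdQ lam mu n x) / of_real (lam (Suc n))"

text \<open>Dual rates: hat lam_k = mu_{k+1}, hat mu_k = lam_k. Then hat pi = bd_pi of the
  dual rates and hat Q = bdQ of the dual rates.\<close>

definition dual_lam :: "(nat \<Rightarrow> real) \<Rightarrow> (nat \<Rightarrow> real) \<Rightarrow> nat \<Rightarrow> real" where
  "dual_lam lam mu k = mu (Suc k)"

definition dual_mu :: "(nat \<Rightarrow> real) \<Rightarrow> (nat \<Rightarrow> real) \<Rightarrow> nat \<Rightarrow> real" where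
  "dual_mu lam mu k = lam k"

definition orth_measure :: "(nat \<Rightarrow> real) \<Rightarrow> (nat \<Rightarrow> real) \<Rightarrow> real measure \<Rightarrow> bool" where
  "orth_measure lam mu m \<longleftrightarrow>
     prob_space m \<and> sets m = sets borel \<and> (AE x in m. 0 \<le> x) \<and>
     (\<forall>i j. integrable m (\<lambda>x. bdQ lam mu i x * bdQ lam mu j x) \<and>
        (\<integral>x. bdQ lam mu i x * bdQ lam mu j x \<partial>m) = (if i = j then 1 / bd_pi lam mu j else 0))"

definition msupport :: "real measure \<Rightarrow> real set" where
  "msupport m = {x. \<forall>e>0. emeasure m (ball x e) > 0}"

definition psi :: "(nat \<Rightarrow> real) \<Rightarrow> nat \<Rightarrow> real \<Rightarrow> 'a::{real_normed_field,banach} \<Rightarrow> 'a" where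
  "psi alpha N t x = (\<Prod>i = 1..N. 1 - of_real (alpha i) * x) * exp (- (of_real t * x))"

end

theory Submission
  imports Defs "HOL-Complex_Analysis.Complex_Analysis"
begin


lemma bdQ_rec:
  fixes x :: "'a::real_field"
  assumes "lam i \<noteq> 0"
  shows "- x * bdQ lam mu i x = (if i = 0 then 0 else of_real (mu i) * bdQ lam mu (i - 1) x)
          - of_real (lam i + mu i) * bdQ lam mu i x + of_real (lam i) * bdQ lam mu (Suc i) x"
proof (cases i)
  case 0
  then show ?thesis using assms by (simp add: field_simps)
next
  case (Suc n)
  then show ?thesis using assms by (simp add: field_simps)
qed

lemma rearr:
  fixes W f A B Cc :: "nat \<Rightarrow> 'a::comm_ring_1"
  assumes "\<And>j. j \<ge> n \<Longrightarrow> W j = 0"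
  shows "(\<Sum>j<Suc n. W j * ((if j = 0 then 0 else A j * f (j - 1)) + B j * f j + Cc j * f (Suc j)))
       = (\<Sum>i<Suc n. ((if i = 0 then 0 else Cc (i - 1) * W (i - 1)) + B i * W i + A (Suc i) * W (Suc i)) * f i)"
proof -
  have s1: "(\<Sum>j<Suc n. W j * (if j = 0 then 0 else A j * f (j - 1)))
      = (\<Sum>i<Suc n. A (Suc i) * W (Suc i) * f i)"
  proof -
    have "(\<Sum>j<Suc n. W j * (if j = 0 then 0 else A j * f (j - 1))) = (\<Sum>i<n. W (Suc i) * (A (Suc i) * f i))"
      by (subst sum.lessThan_Suc_shift) simp
    also have "\<dots> = (\<Sum>i<Suc n. A (Suc i) * W (Suc i) * f i)"
      using assms[of "Suc n"] by (simp add: algebra_simps)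
    finally show ?thesis .
  qed
  have s3: "(\<Sum>j<Suc n. W j * (Cc j * f (Suc j)))
      = (\<Sum>i<Suc n. (if i = 0 then 0 else Cc (i - 1) * W (i - 1)) * f i)"
  proof -
    have "(\<Sum>i<Suc n. (if i = 0 then 0 else Cc (i - 1) * W (i - 1)) * f i) = (\<Sum>i<n. Cc i * W i * f (Suc i))"
      by (subst sum.lessThan_Suc_shift) simp
    also have "\<dots> = (\<Sum>j<Suc n. W j * (Cc j * f (Suc j)))"
      using assms[of n] by (simp add: algebra_simps)
    finally show ?thesis by simp
  qed
  have "(\<Sum>j<Suc n. W j * ((if j = 0 then 0 else A j * f (j - 1)) + B j * f j + Cc j * f (Suc j)))
     = (\<Sum>j<Suc n. W j * (if j = 0 then 0 else A j * f (j - 1))) + (\<Sum>j<Suc n. W j * (B j * f j))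
       + (\<Sum>j<Suc n. W j * (Cc j * f (Suc j)))"
    by (simp add: distrib_left sum.distrib)
  also have "\<dots> = (\<Sum>i<Suc n. A (Suc i) * W (Suc i) * f i) + (\<Sum>i<Suc n. B i * W i * f i)
       + (\<Sum>i<Suc n. (if i = 0 then 0 else Cc (i - 1) * W (i - 1)) * f i)"
    using s1 s3 by (simp add: algebra_simps)
  also have "\<dots> = (\<Sum>i<Suc n. ((if i = 0 then 0 else Cc (i - 1) * W (i - 1)) + B i * W i + A (Suc i) * W (Suc i)) * f i)"
    by (simp add: distrib_right sum.distrib algebra_simps)
  finally show ?thesis .
qed

fun vrow :: "(nat \<Rightarrow> real) \<Rightarrow> (nat \<Rightarrow> real) \<Rightarrow> nat \<Rightarrow> nat \<Rightarrow> real" where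
  "vrow lam mu 0 i = (if i = 0 then 1 else 0)"
| "vrow lam mu (Suc k) i = (if i = 0 then 0 else lam (i - 1) * vrow lam mu k (i - 1))
     + (- (lam i + mu i)) * vrow lam mu k i + mu (Suc i) * vrow lam mu k (Suc i)"

fun Wrow :: "(nat \<Rightarrow> real) \<Rightarrow> (nat \<Rightarrow> real) \<Rightarrow> nat \<Rightarrow> nat \<Rightarrow> real" where
  "Wrow lam mu 0 i = (if i = 0 then 1 else 0)"
| "Wrow lam mu (Suc k) i = (if i = 0 then 0 else lam (i - 1) * Wrow lam mu k (i - 1))
     + (lam i + mu i) * Wrow lam mu k i + mu (Suc i) * Wrow lam mu k (Suc i)"

lemma vrow_supp: "k < i \<Longrightarrow> vrow lam mu k i = 0"
  by (induction k arbitrary: i) auto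

lemma Wrow_supp: "k < i \<Longrightarrow> Wrow lam mu k i = 0"
  by (induction k arbitrary: i) auto

lemma power_expand:
  fixes x :: "'a::real_field"
  assumes lam: "\<And>i. lam i \<noteq> 0"
  shows "(- x) ^ k = (\<Sum>i<Suc k. of_real (vrow lam mu k i) * bdQ lam mu i x)"
proof (induction k)
  case 0
  then show ?case by simp
next
  case (Suc k)
  have "(- x) ^ Suc k = (\<Sum>i<Suc k. of_real (vrow lam mu k i) * (- x * bdQ lam mu i x))"
    by (simp add: Suc sum_distrib_left algebra_simps)
  also have "\<dots> = (\<Sum>i<Suc k. of_real (vrow lam mu k i) *
      ((if i = 0 then 0 else of_real (mu i) * bdQ lam mu (i - 1) x)
          + (- of_real (lam i + mu i)) * bdQ lam mu i x + of_real (lam i) * bdQ lam mu (Suc i) x))"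
    by (intro sum.cong refl, subst bdQ_rec[OF lam]) (simp add: algebra_simps)
  also have "\<dots> = (\<Sum>i<Suc (Suc k). of_real (vrow lam mu k i) *
      ((if i = 0 then 0 else of_real (mu i) * bdQ lam mu (i - 1) x)
          + (- of_real (lam i + mu i)) * bdQ lam mu i x + of_real (lam i) * bdQ lam mu (Suc i) x))"
    by (simp add: vrow_supp)
  also have "\<dots> = (\<Sum>i<Suc (Suc k). ((if i = 0 then 0 else of_real (lam (i - 1)) * of_real (vrow lam mu k (i - 1)))
       + (- of_real (lam i + mu i)) * of_real (vrow lam mu k i) + of_real (mu (Suc i)) * of_real (vrow lam mu k (Suc i)))
       * bdQ lam mu i x)"
    by (rule rearr[where W = "\<lambda>j. of_real (vrow lam mu k j)" and A = "\<lambda>j. of_real (mu j)"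
          and B = "\<lambda>j. - of_real (lam j + mu j)" and Cc = "\<lambda>j. of_real (lam j)"
          and f = "\<lambda>j. bdQ lam mu j x"]) (simp add: vrow_supp)
  also have "\<dots> = (\<Sum>i<Suc (Suc k). of_real (vrow lam mu (Suc k) i) * bdQ lam mu i x)"
    by (intro sum.cong refl) simp
  finally show ?case .
qed




definition Dq :: "(nat \<Rightarrow> real) \<Rightarrow> (nat \<Rightarrow> real) \<Rightarrow> nat \<Rightarrow> 'a::real_field \<Rightarrow> 'a" where
  "Dq lam mu i u = bdQ lam mu (Suc i) u - bdQ lam mu i u"

lemma Dq_rec:
  fixes u :: "'a::real_field"
  assumes "lam i \<noteq> 0"
  shows "of_real (lam i) * Dq lam mu i u =
     (if i = 0 then of_real (mu 0) else of_real (mu i) * Dq lam mu (i - 1) u) - u * bdQ lam mu i u"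
proof (cases i)
  case 0
  then show ?thesis using assms by (simp add: Dq_def field_simps)
next
  case (Suc n)
  have "- u * bdQ lam mu i u = of_real (mu i) * bdQ lam mu (i - 1) u
          - of_real (lam i + mu i) * bdQ lam mu i u + of_real (lam i) * bdQ lam mu (Suc i) u"
    using bdQ_rec[of lam i u mu, OF assms] Suc by simp
  then show ?thesis using Suc by (simp del: bdQ.simps add: Dq_def algebra_simps)
qed

lemma Q_bound:
  fixes u :: "'a::real_normed_field"
  assumes lam: "\<And>i. lam i > 0" and mu: "\<And>i. mu i \<ge> 0" and u: "norm u \<le> \<rho>"
  shows "norm (bdQ lam mu i u) \<le> bdQ lam mu i (- \<rho>) \<and> norm (Dq lam mu i u) \<le> Dq lam mu i (- \<rho>)"
proof (induction i)
  case 0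
  have r0: "0 \<le> \<rho>" using u norm_ge_zero order_trans by blast
  have e1: "of_real (lam 0) * Dq lam mu 0 u = of_real (mu 0) - u"
    using Dq_rec[of lam 0 mu u] lam[of 0] by simp
  have e2: "lam 0 * Dq lam mu 0 (- \<rho>) = mu 0 + \<rho>"
    using Dq_rec[of lam 0 mu "-\<rho>"] lam[of 0] by simp
  have "lam 0 * norm (Dq lam mu 0 u) = norm (of_real (lam 0) * Dq lam mu 0 u)"
    using lam[of 0] by (simp add: norm_mult)
  also have "\<dots> \<le> mu 0 + \<rho>" unfolding e1
    by (rule order_trans[OF norm_triangle_ineq4]) (use mu[of 0] u in simp)
  also have "\<dots> = lam 0 * Dq lam mu 0 (- \<rho>)" using e2 by simp
  finally have "norm (Dq lam mu 0 u) \<le> Dq lam mu 0 (- \<rho>)"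
    using lam[of 0] by simp
  then show ?case by simp
next
  case (Suc i)
  have r0: "0 \<le> \<rho>" using u norm_ge_zero order_trans by blast
  have q: "norm (bdQ lam mu (Suc i) u) \<le> bdQ lam mu (Suc i) (- \<rho>)"
  proof -
    have "bdQ lam mu (Suc i) u = bdQ lam mu i u + Dq lam mu i u" by (simp add: Dq_def)
    moreover have "bdQ lam mu (Suc i) (- \<rho>) = bdQ lam mu i (- \<rho>) + Dq lam mu i (- \<rho>)" by (simp add: Dq_def)
    ultimately show ?thesis using Suc.IH norm_triangle_ineq[of "bdQ lam mu i u" "Dq lam mu i u"] by simp
  qed
  have e1: "of_real (lam (Suc i)) * Dq lam mu (Suc i) u = of_real (mu (Suc i)) * Dq lam mu i u - u * bdQ lam mu (Suc i) u"
    using Dq_rec[of lam "Suc i" mu u] lam[of "Suc i"] by simp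
  have e2: "lam (Suc i) * Dq lam mu (Suc i) (- \<rho>) = mu (Suc i) * Dq lam mu i (- \<rho>) + \<rho> * bdQ lam mu (Suc i) (- \<rho>)"
    using Dq_rec[of lam "Suc i" mu "-\<rho>"] lam[of "Suc i"] by simp
  have "lam (Suc i) * norm (Dq lam mu (Suc i) u) = norm (of_real (lam (Suc i)) * Dq lam mu (Suc i) u)"
    using lam[of "Suc i"] by (simp add: norm_mult)
  also have "\<dots> \<le> norm (of_real (mu (Suc i)) * Dq lam mu i u) + norm (u * bdQ lam mu (Suc i) u)"
    unfolding e1 by (rule norm_triangle_ineq4)
  also have "\<dots> = mu (Suc i) * norm (Dq lam mu i u) + norm u * norm (bdQ lam mu (Suc i) u)"
    using mu[of "Suc i"] by (simp add: norm_mult)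
  also have "\<dots> \<le> mu (Suc i) * Dq lam mu i (- \<rho>) + \<rho> * bdQ lam mu (Suc i) (- \<rho>)"
    by (intro add_mono mult_mono) (use Suc.IH mu[of "Suc i"] u q norm_ge_zero[of u] r0 in auto)
  also have "\<dots> = lam (Suc i) * Dq lam mu (Suc i) (- \<rho>)" using e2 by simp
  finally have "norm (Dq lam mu (Suc i) u) \<le> Dq lam mu (Suc i) (- \<rho>)"
    using lam[of "Suc i"] by simp
  with q show ?case by simp
qed

lemma Q_ge1:
  assumes lam: "\<And>i. lam i > 0" and mu: "\<And>i. mu i \<ge> 0" and r: "0 \<le> (\<rho>::real)"
  shows "1 \<le> bdQ lam mu i (- \<rho>)"
proof (induction i)
  case 0
  then show ?case by simp
next
  case (Suc i)
  have "0 \<le> Dq lam mu i (- \<rho>)"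
    using Q_bound[where u="-\<rho>" and \<rho>=\<rho> and i=i and lam=lam and mu=mu, OF lam mu] r
    by (smt (verit) norm_ge_zero real_norm_def)
  then show ?case using Suc by (simp add: Dq_def)
qed

lemma Wrow_nonneg:
  assumes lam: "\<And>i. lam i \<ge> 0" and mu: "\<And>i. mu i \<ge> 0"
  shows "0 \<le> Wrow lam mu k i"
  by (induction k arbitrary: i) (auto intro!: add_nonneg_nonneg mult_nonneg_nonneg simp: lam mu add_nonneg_nonneg)

lemma vrow_le_Wrow:
  assumes lam: "\<And>i. lam i \<ge> 0" and mu: "\<And>i. mu i \<ge> 0"
  shows "\<bar>vrow lam mu k i\<bar> \<le> Wrow lam mu k i"
proof (induction k arbitrary: i)
  case 0
  then show ?case by simp
next
  case (Suc k)
  have a: "\<bar>(if i = 0 then 0 else lam (i - 1) * vrow lam mu k (i - 1))\<bar>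
      \<le> (if i = 0 then 0 else lam (i - 1) * Wrow lam mu k (i - 1))"
    using Suc.IH lam by (auto simp: abs_mult intro: mult_left_mono)
  have b: "\<bar>(- (lam i + mu i)) * vrow lam mu k i\<bar> \<le> (lam i + mu i) * Wrow lam mu k i"
    using Suc.IH[of i] lam[of i] mu[of i] by (simp add: abs_mult) (metis add_nonneg_nonneg add.commute mult_left_mono)
  have c: "\<bar>mu (Suc i) * vrow lam mu k (Suc i)\<bar> \<le> mu (Suc i) * Wrow lam mu k (Suc i)"
    using Suc.IH[of "Suc i"] mu[of "Suc i"] by (auto simp: abs_mult intro: mult_left_mono)
  have e1: "vrow lam mu (Suc k) i = (if i = 0 then 0 else lam (i - 1) * vrow lam mu k (i - 1))
     + (- (lam i + mu i)) * vrow lam mu k i + mu (Suc i) * vrow lam mu k (Suc i)" by (rule vrow.simps)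
  have e2: "Wrow lam mu (Suc k) i = (if i = 0 then 0 else lam (i - 1) * Wrow lam mu k (i - 1))
     + (lam i + mu i) * Wrow lam mu k i + mu (Suc i) * Wrow lam mu k (Suc i)" by (rule Wrow.simps)
  show ?case unfolding e1 e2 using a b c abs_triangle_ineq order_trans add_mono by (smt (verit))
qed

lemma Wrow_sum_bound:
  assumes lam: "\<And>i. lam i > 0" and mu: "\<And>i. mu i \<ge> 0" and C: "\<And>i. lam i + mu i \<le> C"
    and r: "0 \<le> (\<rho>::real)"
  shows "(\<Sum>i<Suc k. Wrow lam mu k i * bdQ lam mu i (- \<rho>)) \<le> (\<rho> + 2 * C) ^ k"
proof (induction k)
  case 0
  then show ?case by simp
next
  case (Suc k)
  define f where "f i = bdQ lam mu i (- \<rho>)" for i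
  have f1: "\<And>i. 1 \<le> f i" unfolding f_def by (rule Q_ge1[OF lam mu r])
  have Lf: "(if i = 0 then 0 else mu i * f (i - 1)) + (lam i + mu i) * f i + lam i * f (Suc i)
      \<le> (\<rho> + 2 * C) * f i" for i
  proof -
    have "- (- \<rho>) * f i = (if i = 0 then 0 else mu i * f (i - 1)) - (lam i + mu i) * f i + lam i * f (Suc i)"
      unfolding f_def using bdQ_rec[of lam i "-\<rho>" mu] lam[of i] by simp
    then have "(if i = 0 then 0 else mu i * f (i - 1)) + (lam i + mu i) * f i + lam i * f (Suc i)
        = \<rho> * f i + 2 * ((lam i + mu i) * f i)" by simp
    also have "\<dots> \<le> \<rho> * f i + 2 * (C * f i)"
      using C[of i] f1[of i] by (intro add_left_mono mult_left_mono mult_right_mono) auto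
    finally show ?thesis by (simp add: algebra_simps)
  qed
  have W0: "\<And>j. 0 \<le> Wrow lam mu k j" by (rule Wrow_nonneg) (use lam mu less_imp_le in auto)
  have "(\<Sum>i<Suc (Suc k). Wrow lam mu (Suc k) i * f i)
     = (\<Sum>i<Suc (Suc k). ((if i = 0 then 0 else lam (i - 1) * Wrow lam mu k (i - 1))
          + (lam i + mu i) * Wrow lam mu k i + mu (Suc i) * Wrow lam mu k (Suc i)) * f i)"
    by simp
  also have "\<dots> = (\<Sum>j<Suc (Suc k). Wrow lam mu k j *
       ((if j = 0 then 0 else mu j * f (j - 1)) + (lam j + mu j) * f j + lam j * f (Suc j)))"
    by (rule rearr[symmetric]) (simp add: Wrow_supp)
  also have "\<dots> \<le> (\<Sum>j<Suc (Suc k). Wrow lam mu k j * ((\<rho> + 2 * C) * f j))"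
    by (intro sum_mono mult_left_mono Lf W0)
  also have "\<dots> = (\<rho> + 2 * C) * (\<Sum>j<Suc k. Wrow lam mu k j * f j)"
    by (simp add: sum_distrib_left Wrow_supp algebra_simps)
  also have "\<dots> \<le> (\<rho> + 2 * C) * (\<rho> + 2 * C) ^ k"
  proof (rule mult_left_mono)
    show "(\<Sum>j<Suc k. Wrow lam mu k j * f j) \<le> (\<rho> + 2 * C) ^ k" using Suc by (simp add: f_def)
    show "0 \<le> \<rho> + 2 * C" using C[of 0] lam[of 0] mu[of 0] r by linarith
  qed
  finally show ?case by (simp add: f_def)
qed

lemma vQ_bound:
  fixes u :: "'a::real_normed_field"
  assumes lam: "\<And>i. lam i > 0" and mu: "\<And>i. mu i \<ge> 0" and C: "\<And>i. lam i + mu i \<le> C"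
    and u: "norm u \<le> \<rho>"
  shows "(\<Sum>i<Suc k. \<bar>vrow lam mu k i\<bar> * norm (bdQ lam mu i u)) \<le> (\<rho> + 2 * C) ^ k"
proof -
  have r: "0 \<le> \<rho>" using u norm_ge_zero order_trans by blast
  have "(\<Sum>i<Suc k. \<bar>vrow lam mu k i\<bar> * norm (bdQ lam mu i u))
      \<le> (\<Sum>i<Suc k. Wrow lam mu k i * bdQ lam mu i (- \<rho>))"
  proof (intro sum_mono mult_mono)
    fix i
    show "\<bar>vrow lam mu k i\<bar> \<le> Wrow lam mu k i" by (rule vrow_le_Wrow) (use lam mu less_imp_le in auto)
    show "norm (bdQ lam mu i u) \<le> bdQ lam mu i (- \<rho>)" using Q_bound[where lam=lam and mu=mu, OF lam mu u] by blast
    show "0 \<le> Wrow lam mu k i" by (rule Wrow_nonneg) (use lam mu less_imp_le in auto)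
  qed simp
  also have "\<dots> \<le> (\<rho> + 2 * C) ^ k" by (rule Wrow_sum_bound[OF lam mu C r])
  finally show ?thesis .
qed

lemma vrow0_bound:
  assumes lam: "\<And>i. lam i > 0" and mu: "\<And>i. mu i \<ge> 0" and C: "\<And>i. lam i + mu i \<le> C"
  shows "\<bar>vrow lam mu k 0\<bar> \<le> (2 * C) ^ k"
proof -
  have "\<bar>vrow lam mu k 0\<bar> * norm (bdQ lam mu 0 (0::real)) \<le> (\<Sum>i<Suc k. \<bar>vrow lam mu k i\<bar> * norm (bdQ lam mu i (0::real)))"
    by (rule member_le_sum) auto
  also have "\<dots> \<le> (0 + 2 * C) ^ k" by (rule vQ_bound[OF lam mu C]) simp
  finally show ?thesis by simp
qed

lemma trunc_bound:
  fixes u :: "'a::real_normed_field"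
  assumes lam: "\<And>i. lam i > 0" and mu: "\<And>i. mu i \<ge> 0" and C: "\<And>i. lam i + mu i \<le> C"
    and u: "norm u \<le> \<rho>"
  shows "norm ((\<Sum>i<M. of_real (vrow lam mu k i) * bdQ lam mu i u) - (- u) ^ k)
      \<le> (if k < M then 0 else 2 * (\<rho> + 2 * C) ^ k)"
proof (cases "k < M")
  case True
  have "(\<Sum>i<M. of_real (vrow lam mu k i) * bdQ lam mu i u) = (\<Sum>i<Suc k. of_real (vrow lam mu k i) * bdQ lam mu i u)"
    by (rule sum.mono_neutral_right) (use True in \<open>auto simp: vrow_supp\<close>)
  then show ?thesis using True power_expand[of lam u k mu] lam by (simp add: less_imp_neq[symmetric])
next
  case False
  have r: "0 \<le> \<rho>" using u norm_ge_zero order_trans by blast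
  have C0: "0 \<le> C" using C[of 0] lam[of 0] mu[of 0] by linarith
  have "norm ((\<Sum>i<M. of_real (vrow lam mu k i) * bdQ lam mu i u) - (- u) ^ k)
     \<le> (\<Sum>i<M. \<bar>vrow lam mu k i\<bar> * norm (bdQ lam mu i u)) + norm u ^ k"
    by (rule order_trans[OF norm_triangle_ineq4], rule add_mono,
        rule order_trans[OF norm_sum], auto simp: norm_mult norm_power)
  also have "\<dots> \<le> (\<Sum>i<Suc k. \<bar>vrow lam mu k i\<bar> * norm (bdQ lam mu i u)) + \<rho> ^ k"
    by (intro add_mono sum_mono2 power_mono u) (use False in auto)
  also have "\<dots> \<le> (\<rho> + 2 * C) ^ k + (\<rho> + 2 * C) ^ k"
    by (intro add_mono vQ_bound[OF lam mu C u] power_mono) (use r C0 in auto)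
  finally show ?thesis using False by simp
qed




locale bdc =
  fixes lam mu :: "nat \<Rightarrow> real" and m :: "real measure" and C :: real
  assumes lam: "\<And>i. lam i > 0" and mu: "\<And>i. mu i \<ge> 0" and mu1: "\<And>i. i \<ge> 1 \<Longrightarrow> mu i > 0"
    and C: "\<And>i. lam i + mu i \<le> C" and orth: "orth_measure lam mu m"
begin

lemma pi_pos: "bd_pi lam mu k > 0"
  unfolding bd_pi_def by (rule prod_pos) (use lam mu1 in auto)

lemma C0: "0 \<le> C" using C[of 0] lam[of 0] mu[of 0] by linarith

lemma QQ_int: "integrable m (\<lambda>x. bdQ lam mu i x * bdQ lam mu j x)"
  and QQ_val: "(\<integral>x. bdQ lam mu i x * bdQ lam mu j x \<partial>m) = (if i = j then 1 / bd_pi lam mu j else 0)"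
  using orth unfolding orth_measure_def by auto

lemma Qpow_eq: "bdQ lam mu i x * (- x) ^ k = (\<Sum>l<Suc k. vrow lam mu k l * (bdQ lam mu i x * bdQ lam mu l x))"
proof -
  have "(- x) ^ k = (\<Sum>l<Suc k. of_real (vrow lam mu k l) * bdQ lam mu l x)"
    by (rule power_expand) (use lam less_imp_neq in force)
  then show ?thesis by (simp add: sum_distrib_left algebra_simps)
qed

lemma Qpow_int: "integrable m (\<lambda>x. bdQ lam mu i x * (- x) ^ k)"
  unfolding Qpow_eq
  apply (rule Bochner_Integration.integrable_sum)
  apply (rule integrable_mult_right)
  apply (rule QQ_int)
  done

lemma Qpow_val: "(\<integral>x. bdQ lam mu i x * (- x) ^ k \<partial>m) = vrow lam mu k i / bd_pi lam mu i"
proof -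
  have "(\<integral>x. bdQ lam mu i x * (- x) ^ k \<partial>m)
      = (\<Sum>l<Suc k. vrow lam mu k l * (if i = l then 1 / bd_pi lam mu l else 0))"
    unfolding Qpow_eq by (subst Bochner_Integration.integral_sum) (auto intro!: integrable_mult_right QQ_int simp: QQ_val)
  also have "\<dots> = vrow lam mu k i / bd_pi lam mu i"
  proof -
    have "(\<Sum>l<Suc k. vrow lam mu k l * (if i = l then 1 / bd_pi lam mu l else 0))
        = (\<Sum>l\<in>{..<Suc k}. if i = l then vrow lam mu k l / bd_pi lam mu l else 0)"
      by (intro sum.cong) auto
    also have "\<dots> = (if i \<in> {..<Suc k} then vrow lam mu k i / bd_pi lam mu i else 0)"
      by (rule sum.delta') simp
    also have "\<dots> = vrow lam mu k i / bd_pi lam mu i" by (auto simp: vrow_supp)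
    finally show ?thesis .
  qed
  finally show ?thesis .
qed

lemma mom_int: "integrable m (\<lambda>x. x ^ (2 * k))"
  using Qpow_int[where i=0 and k="2 * k"] by simp

lemma mom_le: "(\<integral>x. x ^ (2 * k) \<partial>m) \<le> (2 * C) ^ (2 * k)"
proof -
  have "(\<integral>x. x ^ (2 * k) \<partial>m) = vrow lam mu (2 * k) 0"
    using Qpow_val[where i=0 and k="2 * k"] by (simp add: bd_pi_def)
  also have "\<dots> \<le> (2 * C) ^ (2 * k)" using vrow0_bound[where k="2 * k" and lam=lam and mu=mu, OF lam mu C] by simp
  finally show ?thesis .
qed

lemma absQpow_le: "(\<integral>x. \<bar>bdQ lam mu i x * (- x) ^ k\<bar> \<partial>m) \<le> (1 / bd_pi lam mu i + (2 * C) ^ (2 * k)) / 2"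
proof -
  have "(\<integral>x. \<bar>bdQ lam mu i x * (- x) ^ k\<bar> \<partial>m) \<le> (\<integral>x. (bdQ lam mu i x * bdQ lam mu i x + x ^ (2 * k)) / 2 \<partial>m)"
  proof (rule integral_mono)
    show "integrable m (\<lambda>x. \<bar>bdQ lam mu i x * (- x) ^ k\<bar>)" by (rule integrable_abs[OF Qpow_int])
    show "integrable m (\<lambda>x. (bdQ lam mu i x * bdQ lam mu i x + x ^ (2 * k)) / 2)"
      by (intro integrable_divide_zero Bochner_Integration.integrable_add QQ_int mom_int)
    fix x :: real
    have sq: "(- x) ^ k * (- x) ^ k = x ^ (2 * k)"
      by (simp add: mult_2 power_add[symmetric])
    have sq2: "(- x) ^ k * (- x) ^ k = x ^ k * x ^ k"
      by (metis minus_mult_minus power_mult_distrib)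
    have "2 * \<bar>bdQ lam mu i x\<bar> * \<bar>(- x) ^ k\<bar> \<le> \<bar>bdQ lam mu i x\<bar>\<^sup>2 + \<bar>(- x) ^ k\<bar>\<^sup>2"
      by (rule sum_squares_bound)
    then show "\<bar>bdQ lam mu i x * (- x) ^ k\<bar> \<le> (bdQ lam mu i x * bdQ lam mu i x + x ^ (2 * k)) / 2"
      unfolding sq[symmetric] using sq2 by (simp add: abs_mult power2_eq_square)
  qed
  also have "\<dots> = (1 / bd_pi lam mu i + (\<integral>x. x ^ (2 * k) \<partial>m)) / 2"
    by (simp add: QQ_int mom_int QQ_val)
  also have "\<dots> \<le> (1 / bd_pi lam mu i + (2 * C) ^ (2 * k)) / 2"
    using mom_le by simp
  finally show ?thesis .
qed

lemma exp_series:
  assumes t: "0 \<le> t"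
  shows "(\<lambda>j. t ^ j / fact j * (vrow lam mu (q + j) i / bd_pi lam mu i)) sums
           (\<integral>x. bdQ lam mu i x * (- x) ^ q * exp (- (t * x)) \<partial>m)"
    "integrable m (\<lambda>x. bdQ lam mu i x * (- x) ^ q * exp (- (t * x)))"
proof -
  define f where "f j x = t ^ j / fact j * (bdQ lam mu i x * (- x) ^ (q + j))" for j x
  have fint: "integrable m (f j)" for j unfolding f_def by (intro integrable_mult_right Qpow_int)
  have fsum: "(\<lambda>j. f j x) sums (bdQ lam mu i x * (- x) ^ q * exp (- (t * x)))" for x :: real
  proof -
    have "(\<lambda>j. (bdQ lam mu i x * (- x) ^ q) * ((- (t * x)) ^ j /\<^sub>R fact j)) sums
        ((bdQ lam mu i x * (- x) ^ q) * exp (- (t * x)))"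
      by (intro sums_mult exp_converges)
    moreover have "(bdQ lam mu i x * (- x) ^ q) * ((- (t * x)) ^ j /\<^sub>R fact j) = f j x" for j
    proof -
      have p: "(- (t * x)) ^ j = t ^ j * (- x) ^ j" by (metis mult_minus_right power_mult_distrib)
      have "(- (t * x)) ^ j /\<^sub>R fact j = t ^ j / fact j * (- x) ^ j"
        unfolding p by (simp add: divide_inverse)
      then show ?thesis by (simp only: f_def power_add mult_ac)
    qed
    ultimately show ?thesis by simp
  qed
  have nsum: "summable (\<lambda>j. norm (f j x))" for x :: real
  proof -
    have "summable (\<lambda>j. norm (bdQ lam mu i x * (- x) ^ q) * norm ((- (t * x)) ^ j /\<^sub>R fact j))"
      by (intro summable_mult summable_norm_exp)
    moreover have "norm (bdQ lam mu i x * (- x) ^ q) * norm ((- (t * x)) ^ j /\<^sub>R fact j) = norm (f j x)" for j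
    proof -
      have p: "(- (t * x)) ^ j = t ^ j * (- x) ^ j" by (metis mult_minus_right power_mult_distrib)
      have "norm ((- (t * x)) ^ j /\<^sub>R fact j) = t ^ j / fact j * \<bar>(- x) ^ j\<bar>"
        unfolding p using t by (simp add: abs_mult divide_inverse)
      then show ?thesis using t by (simp only: f_def power_add mult_ac real_norm_def abs_mult zero_le_power abs_of_nonneg divide_nonneg_nonneg fact_ge_zero)
    qed
    ultimately show ?thesis by (simp only:)
  qed
  have isum: "summable (\<lambda>j. \<integral>x. norm (f j x) \<partial>m)"
  proof (rule summable_comparison_test')
    define g where "g j = inverse (fact j) * t ^ j * (1 / bd_pi lam mu i / 2)
        + inverse (fact j) * (t * (2 * C) ^ 2) ^ j * ((2 * C) ^ (2 * q) / 2)" for j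
    show "summable g" unfolding g_def
      by (intro summable_add summable_mult2 summable_exp)
    fix j
    have "(\<integral>x. norm (f j x) \<partial>m) = t ^ j / fact j * (\<integral>x. \<bar>bdQ lam mu i x * (- x) ^ (q + j)\<bar> \<partial>m)"
      using t by (simp add: f_def abs_mult)
    also have "\<dots> \<le> t ^ j / fact j * ((1 / bd_pi lam mu i + (2 * C) ^ (2 * (q + j))) / 2)"
      by (intro mult_left_mono absQpow_le) (use t in auto)
    also have "\<dots> = g j"
    proof -
      have e: "(2 * C) ^ (2 * (q + j)) = (2 * C) ^ (2 * q) * ((2 * C) ^ 2) ^ j"
        by (simp only: distrib_left power_add power_mult)
      have aux: "(a::real) / b * ((P + A * B) / 2) = inverse b * a * (P / 2) + inverse b * (a * B) * (A / 2)"
        for a b P A B unfolding divide_inverse by algebra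
      show ?thesis unfolding g_def e power_mult_distrib[of t] by (rule aux)
    qed
    finally show "norm (\<integral>x. norm (f j x) \<partial>m) \<le> g j" by simp
  qed
  have "(\<lambda>j. integral\<^sup>L m (f j)) sums (\<integral>x. (\<Sum>j. f j x) \<partial>m)"
    by (rule sums_integral[OF fint _ isum]) (use nsum in simp)
  moreover have "integral\<^sup>L m (f j) = t ^ j / fact j * (vrow lam mu (q + j) i / bd_pi lam mu i)" for j
    by (simp add: f_def[abs_def] Qpow_val)
  moreover have "(\<Sum>j. f j x) = bdQ lam mu i x * (- x) ^ q * exp (- (t * x))" for x
    using fsum[of x] by (simp add: sums_iff)
  ultimately show "(\<lambda>j. t ^ j / fact j * (vrow lam mu (q + j) i / bd_pi lam mu i)) sums
           (\<integral>x. bdQ lam mu i x * (- x) ^ q * exp (- (t * x)) \<partial>m)" by simp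
  have "integrable m (\<lambda>x. (\<Sum>j. f j x))"
    by (rule integrable_suminf[OF fint _ isum]) (use nsum in simp)
  moreover have "(\<lambda>x. (\<Sum>j. f j x)) = (\<lambda>x. bdQ lam mu i x * (- x) ^ q * exp (- (t * x)))"
    using fsum by (simp add: sums_iff fun_eq_iff)
  ultimately show "integrable m (\<lambda>x. bdQ lam mu i x * (- x) ^ q * exp (- (t * x)))" by simp
qed

end




lemma norm_sums_le:
  fixes f :: "nat \<Rightarrow> 'a::banach"
  assumes "f sums S" "\<And>j. norm (f j) \<le> b j" "b sums B"
  shows "norm S \<le> B"
proof -
  have sb: "summable (\<lambda>j. norm (f j))"
    by (rule summable_comparison_test'[where g=b]) (use assms sums_summable in auto)
  have "norm S = norm (suminf f)" using assms(1) by (simp add: sums_iff)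
  also have "\<dots> \<le> (\<Sum>j. norm (f j))" by (rule summable_norm[OF sb])
  also have "\<dots> \<le> suminf b" by (rule suminf_le) (use assms sb sums_summable in auto)
  also have "\<dots> = B" using assms(3) by (simp add: sums_iff)
  finally show ?thesis .
qed

definition tailE :: "real \<Rightarrow> nat \<Rightarrow> real" where
  "tailE s J = exp s - (\<Sum>j<J. s ^ j / fact j)"

lemma tailE_sums: "(\<lambda>j. if J \<le> j then s ^ j / fact j else 0) sums tailE s J"
proof -
  have "(\<lambda>j. s ^ j / fact j) sums exp s" using exp_converges[of s] by (simp add: divide_inverse mult.commute)
  moreover have "(\<lambda>j. if j \<in> {..<J} then s ^ j / fact j else 0) sums (\<Sum>j<J. s ^ j / fact j)"
    by (rule sums_If_finite_set) simp
  ultimately have "(\<lambda>j. s ^ j / fact j - (if j \<in> {..<J} then s ^ j / fact j else 0)) sums tailE s J"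
    unfolding tailE_def by (rule sums_diff)
  moreover have "(\<lambda>j. s ^ j / fact j - (if j \<in> {..<J} then s ^ j / fact j else 0)) = (\<lambda>j. if J \<le> j then s ^ j / fact j else 0)"
    by (auto simp: fun_eq_iff)
  ultimately show ?thesis by simp
qed

lemma tailE_lim: "(\<lambda>J. tailE s J) \<longlonglongrightarrow> 0"
proof -
  have "(\<lambda>j. s ^ j / fact j) sums exp s" using exp_converges[of s] by (simp add: divide_inverse mult.commute)
  then have "(\<lambda>J. \<Sum>j<J. s ^ j / fact j) \<longlonglongrightarrow> exp s" by (simp add: sums_def)
  then have "(\<lambda>J. exp s - (\<Sum>j<J. s ^ j / fact j)) \<longlonglongrightarrow> exp s - exp s"
    by (intro tendsto_diff tendsto_const)
  then show ?thesis by (simp add: tailE_def)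
qed

lemma tailE_lim_shift: "(\<lambda>M. tailE s (M - q)) \<longlonglongrightarrow> 0"
  by (rule filterlim_compose[OF tailE_lim filterlim_minus_const_nat_at_top])

fun pc :: "(nat \<Rightarrow> real) \<Rightarrow> nat \<Rightarrow> nat \<Rightarrow> real" where
  "pc \<alpha> 0 p = (if p = 0 then 1 else 0)"
| "pc \<alpha> (Suc N) p = pc \<alpha> N p + \<alpha> (Suc N) * (if p = 0 then 0 else pc \<alpha> N (p - 1))"

lemma pc_supp: "N < p \<Longrightarrow> pc \<alpha> N p = 0"
  by (induction N arbitrary: p) auto

lemma prod_expand:
  fixes x :: "'a::real_field"
  shows "(\<Prod>i = 1..N. 1 - of_real (\<alpha> i) * x) = (\<Sum>p<Suc N. of_real (pc \<alpha> N p) * (- x) ^ p)"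
proof (induction N)
  case 0
  then show ?case by simp
next
  case (Suc N)
  define c where "c p = (of_real (pc \<alpha> N p) :: 'a)" for p
  define a where "a = (of_real (\<alpha> (Suc N)) :: 'a)"
  have "(\<Prod>i = 1..Suc N. 1 - of_real (\<alpha> i) * x) = (\<Prod>i = 1..N. 1 - of_real (\<alpha> i) * x) * (1 - of_real (\<alpha> (Suc N)) * x)"
    by (rule prod.cl_ivl_Suc[THEN trans]) simp
  also have "\<dots> = (\<Sum>p<Suc N. c p * (- x) ^ p) * (1 + a * (- x))"
    unfolding Suc.IH by (simp add: c_def a_def)
  also have "\<dots> = (\<Sum>p<Suc N. c p * (- x) ^ p) + (\<Sum>p<Suc N. a * c p * (- x) ^ Suc p)"
  proof -
    have g: "\<And>S y::'a. S * (1 + y) = S + y * S" by (simp add: algebra_simps)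
    show ?thesis unfolding g sum_distrib_left by (intro arg_cong2[where f="(+)"] sum.cong refl) (simp add: mult_ac)
  qed
  also have "(\<Sum>p<Suc N. c p * (- x) ^ p) = (\<Sum>p<Suc (Suc N). c p * (- x) ^ p)"
    by (simp add: c_def pc_supp)
  also have "(\<Sum>p<Suc N. a * c p * (- x) ^ Suc p) = (\<Sum>p<Suc (Suc N). (if p = 0 then 0 else a * c (p - 1)) * (- x) ^ p)"
    by (subst sum.lessThan_Suc_shift) simp
  also have "(\<Sum>p<Suc (Suc N). c p * (- x) ^ p) + (\<Sum>p<Suc (Suc N). (if p = 0 then 0 else a * c (p - 1)) * (- x) ^ p)
      = (\<Sum>p<Suc (Suc N). of_real (pc \<alpha> (Suc N) p) * (- x) ^ p)"
    unfolding sum.distrib[symmetric] by (intro sum.cong refl) (auto simp: c_def a_def algebra_simps)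
  finally show ?case .
qed

lemma psi_expand:
  fixes x :: "'a::{real_normed_field,banach}"
  shows "psi \<alpha> N t x = (\<Sum>p<Suc N. of_real (pc \<alpha> N p) * (- x) ^ p) * exp (- (of_real t * x))"
  unfolding psi_def prod_expand ..


context bdc
begin

definition Hq :: "real \<Rightarrow> nat \<Rightarrow> nat \<Rightarrow> real" where
  "Hq t q i = bd_pi lam mu i * (\<integral>x. bdQ lam mu i x * (- x) ^ q * exp (- (t * x)) \<partial>m)"

lemma Hq_sums:
  assumes t: "0 \<le> t"
  shows "(\<lambda>j. t ^ j / fact j * vrow lam mu (q + j) i) sums Hq t q i"
proof -
  have "(\<lambda>j. bd_pi lam mu i * (t ^ j / fact j * (vrow lam mu (q + j) i / bd_pi lam mu i))) sums Hq t q i"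
    unfolding Hq_def by (rule sums_mult[OF exp_series(1)[OF t]])
  moreover have "bd_pi lam mu i * (t ^ j / fact j * (vrow lam mu (q + j) i / bd_pi lam mu i))
      = t ^ j / fact j * vrow lam mu (q + j) i" for j
    using pi_pos[of i] by simp
  ultimately show ?thesis by simp
qed

lemma Psi_eq:
  assumes t: "0 \<le> t"
  shows "(\<integral>x. bd_pi lam mu i * bdQ lam mu i x * (- x) ^ a * psi \<alpha> N t x \<partial>m)
       = (\<Sum>p<Suc N. pc \<alpha> N p * Hq t (a + p) i)"
proof -
  have "(\<lambda>x. bd_pi lam mu i * bdQ lam mu i x * (- x) ^ a * psi \<alpha> N t x)
      = (\<lambda>x. \<Sum>p<Suc N. pc \<alpha> N p * bd_pi lam mu i * (bdQ lam mu i x * (- x) ^ (a + p) * exp (- (t * x))))"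
    by (rule ext) (simp add: psi_expand sum_distrib_left sum_distrib_right power_add mult_ac del: sum.lessThan_Suc)
  then have "(\<integral>x. bd_pi lam mu i * bdQ lam mu i x * (- x) ^ a * psi \<alpha> N t x \<partial>m)
      = (\<Sum>p<Suc N. \<integral>x. pc \<alpha> N p * bd_pi lam mu i * (bdQ lam mu i x * (- x) ^ (a + p) * exp (- (t * x))) \<partial>m)"
    by (simp add: Bochner_Integration.integral_sum exp_series(2)[OF t])
  also have "\<dots> = (\<Sum>p<Suc N. pc \<alpha> N p * Hq t (a + p) i)"
    by (simp add: Hq_def mult.assoc)
  finally show ?thesis .
qed

lemma D_bound:
  fixes u :: complex
  assumes t: "0 \<le> t" and u: "norm u \<le> \<rho>"
  shows "norm ((\<Sum>i<M. of_real (Hq t q i) * bdQ lam mu i u) - (- u) ^ q * exp (- (of_real t * u)))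
     \<le> 2 * (\<rho> + 2 * C) ^ q * tailE (t * (\<rho> + 2 * C)) (M - q)"
proof -
  have r: "0 \<le> \<rho>" using u norm_ge_zero order_trans by blast
  have A: "(\<lambda>j. \<Sum>i<M. of_real (t ^ j / fact j * vrow lam mu (q + j) i) * bdQ lam mu i u) sums
      (\<Sum>i<M. of_real (Hq t q i) * bdQ lam mu i u)"
    by (intro sums_sum sums_mult2 sums_of_real Hq_sums t)
  have B: "(\<lambda>j. of_real (t ^ j / fact j) * (- u) ^ (q + j)) sums ((- u) ^ q * exp (- (of_real t * u)))"
  proof -
    have "(\<lambda>j. (- u) ^ q * ((- (of_real t * u)) ^ j /\<^sub>R fact j)) sums ((- u) ^ q * exp (- (of_real t * u)))"
      by (intro sums_mult exp_converges)
    moreover have "(- u) ^ q * ((- (of_real t * u)) ^ j /\<^sub>R fact j) = of_real (t ^ j / fact j) * (- u) ^ (q + j)" for j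
    proof -
      have p: "(- (of_real t * u)) ^ j = of_real t ^ j * (- u) ^ j" by (metis mult_minus_right power_mult_distrib)
      show ?thesis unfolding p by (simp add: scaleR_conv_of_real power_add divide_inverse mult_ac)
    qed
    ultimately show ?thesis by simp
  qed
  have "(\<lambda>j. (\<Sum>i<M. of_real (t ^ j / fact j * vrow lam mu (q + j) i) * bdQ lam mu i u)
      - of_real (t ^ j / fact j) * (- u) ^ (q + j)) sums
      ((\<Sum>i<M. of_real (Hq t q i) * bdQ lam mu i u) - (- u) ^ q * exp (- (of_real t * u)))"
    by (rule sums_diff[OF A B])
  moreover have "norm ((\<Sum>i<M. of_real (t ^ j / fact j * vrow lam mu (q + j) i) * bdQ lam mu i u)
      - of_real (t ^ j / fact j) * (- u) ^ (q + j))
      \<le> 2 * (\<rho> + 2 * C) ^ q * (if M - q \<le> j then (t * (\<rho> + 2 * C)) ^ j / fact j else 0)" for j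
  proof -
    define c where "c = t ^ j / fact j"
    have c0: "0 \<le> c" unfolding c_def using t by simp
    have "(\<Sum>i<M. of_real (t ^ j / fact j * vrow lam mu (q + j) i) * bdQ lam mu i u)
      - of_real (t ^ j / fact j) * (- u) ^ (q + j)
      = of_real c * ((\<Sum>i<M. of_real (vrow lam mu (q + j) i) * bdQ lam mu i u) - (- u) ^ (q + j))"
      unfolding c_def of_real_mult by (simp add: sum_distrib_left right_diff_distrib mult_ac)
    then have "norm ((\<Sum>i<M. of_real (t ^ j / fact j * vrow lam mu (q + j) i) * bdQ lam mu i u)
      - of_real (t ^ j / fact j) * (- u) ^ (q + j))
      = c * norm ((\<Sum>i<M. of_real (vrow lam mu (q + j) i) * bdQ lam mu i u) - (- u) ^ (q + j))"
      using c0 by (simp add: norm_mult)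
    then have "norm ((\<Sum>i<M. of_real (t ^ j / fact j * vrow lam mu (q + j) i) * bdQ lam mu i u)
      - of_real (t ^ j / fact j) * (- u) ^ (q + j))
      = t ^ j / fact j * norm ((\<Sum>i<M. of_real (vrow lam mu (q + j) i) * bdQ lam mu i u) - (- u) ^ (q + j))"
      by (simp only: c_def)
    also have "\<dots> \<le> t ^ j / fact j * (if q + j < M then 0 else 2 * (\<rho> + 2 * C) ^ (q + j))"
      by (intro mult_left_mono trunc_bound[OF lam mu C u]) (use t in auto)
    also have "\<dots> = 2 * (\<rho> + 2 * C) ^ q * (if M - q \<le> j then (t * (\<rho> + 2 * C)) ^ j / fact j else 0)"
      by (auto simp: power_add power_mult_distrib)
    finally show ?thesis .
  qed
  moreover have "(\<lambda>j. 2 * (\<rho> + 2 * C) ^ q * (if M - q \<le> j then (t * (\<rho> + 2 * C)) ^ j / fact j else 0))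
      sums (2 * (\<rho> + 2 * C) ^ q * tailE (t * (\<rho> + 2 * C)) (M - q))"
    by (intro sums_mult tailE_sums)
  ultimately show ?thesis by (rule norm_sums_le)
qed


definition beta :: "(nat \<Rightarrow> real) \<Rightarrow> nat \<Rightarrow> real \<Rightarrow> nat \<Rightarrow> real \<Rightarrow> nat \<Rightarrow> real" where
  "beta \<alpha> N t a \<rho> M = (\<Sum>p<Suc N. \<bar>pc \<alpha> N p\<bar> *
      (2 * (\<rho> + 2 * C) ^ (a + p) * tailE (t * (\<rho> + 2 * C)) (M - (a + p))))"

lemma beta_lim: "(\<lambda>M. beta \<alpha> N t a \<rho> M) \<longlonglongrightarrow> 0"
proof -
  have "(\<lambda>M. beta \<alpha> N t a \<rho> M) \<longlonglongrightarrow> (\<Sum>p<Suc N. \<bar>pc \<alpha> N p\<bar> * (2 * (\<rho> + 2 * C) ^ (a + p) * 0))"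
    unfolding beta_def by (intro tendsto_sum tendsto_mult tendsto_const tailE_lim_shift)
  then show ?thesis by simp
qed

lemma approx:
  fixes u :: complex
  assumes t: "0 \<le> t" and u: "norm u \<le> \<rho>"
  shows "norm ((\<Sum>i<M. of_real (\<integral>x. bd_pi lam mu i * bdQ lam mu i x * (- x) ^ a * psi \<alpha> N t x \<partial>m)
            * bdQ lam mu i u) - (- u) ^ a * psi \<alpha> N t u) \<le> beta \<alpha> N t a \<rho> M"
proof -
  define X where "X p = (\<Sum>i<M. of_real (Hq t (a + p) i) * bdQ lam mu i u)
      - (- u) ^ (a + p) * exp (- (of_real t * u))" for p
  have L: "(\<Sum>i<M. of_real (\<integral>x. bd_pi lam mu i * bdQ lam mu i x * (- x) ^ a * psi \<alpha> N t x \<partial>m)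
            * bdQ lam mu i u) = (\<Sum>p<Suc N. of_real (pc \<alpha> N p) * (\<Sum>i<M. of_real (Hq t (a + p) i) * bdQ lam mu i u))"
    unfolding Psi_eq[OF t] of_real_sum of_real_mult
    by (simp add: sum_distrib_left sum_distrib_right mult_ac del: sum.lessThan_Suc) (rule sum.swap)
  have R: "(- u) ^ a * psi \<alpha> N t u = (\<Sum>p<Suc N. of_real (pc \<alpha> N p) * ((- u) ^ (a + p) * exp (- (of_real t * u))))"
    unfolding psi_expand by (simp add: sum_distrib_left sum_distrib_right power_add mult_ac del: sum.lessThan_Suc)
  have "(\<Sum>i<M. of_real (\<integral>x. bd_pi lam mu i * bdQ lam mu i x * (- x) ^ a * psi \<alpha> N t x \<partial>m)
            * bdQ lam mu i u) - (- u) ^ a * psi \<alpha> N t u = (\<Sum>p<Suc N. of_real (pc \<alpha> N p) * X p)"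
    unfolding L R X_def by (simp add: sum_subtractf[symmetric] right_diff_distrib del: sum.lessThan_Suc)
  then have "norm ((\<Sum>i<M. of_real (\<integral>x. bd_pi lam mu i * bdQ lam mu i x * (- x) ^ a * psi \<alpha> N t x \<partial>m)
            * bdQ lam mu i u) - (- u) ^ a * psi \<alpha> N t u) \<le> (\<Sum>p<Suc N. \<bar>pc \<alpha> N p\<bar> * norm (X p))"
    by (auto intro!: order_trans[OF norm_sum] simp: norm_mult simp del: sum.lessThan_Suc)
  also have "\<dots> \<le> beta \<alpha> N t a \<rho> M"
    unfolding beta_def X_def by (intro sum_mono mult_left_mono D_bound[OF t u]) auto
  finally show ?thesis .
qed

end




lemma cint_eq:
  assumes "(f has_contour_integral I) g"
  shows "cint g f = I"
proof -
  have h: "has_cint f i g \<longleftrightarrow> (f has_contour_integral i) g" for i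
    unfolding has_cint_def has_contour_integral_def ..
  show ?thesis unfolding cint_def
  proof (rule someI2[where a=I])
    show "has_cint f I g \<or> \<not> (\<exists>j. has_cint f j g) \<and> I = 0" using assms h by blast
    fix i assume "has_cint f i g \<or> \<not> (\<exists>j. has_cint f j g) \<and> i = 0"
    then show "i = I" using assms h has_contour_integral_unique by blast
  qed
qed

lemma bdQ_holo2:
  assumes "\<And>i. lam i \<noteq> 0"
  shows "bdQ lam mu i holomorphic_on S \<and> bdQ lam mu (Suc i) holomorphic_on S"
proof (induction i)
  case 0
  show ?case using assms[of 0] by (auto intro!: holomorphic_intros)
next
  case (Suc i)
  then show ?case using assms[of "Suc i"] by (auto intro!: holomorphic_intros)
qed

lemma bdQ_holo: "(\<And>i. lam i \<noteq> 0) \<Longrightarrow> bdQ lam mu i holomorphic_on S"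
  using bdQ_holo2 by blast

lemma psi_holo: "psi \<alpha> N t holomorphic_on S"
  unfolding psi_def by (intro holomorphic_intros holomorphic_on_prod)

lemma psi_zeros_finite: "finite {z::complex. psi \<alpha> N t z = 0}"
proof (rule finite_subset)
  show "{z::complex. psi \<alpha> N t z = 0} \<subseteq> (\<lambda>i. 1 / of_real (\<alpha> i)) ` {1..N}"
  proof
    fix z :: complex assume "z \<in> {z. psi \<alpha> N t z = 0}"
    then have "(\<Prod>i = 1..N. 1 - of_real (\<alpha> i) * z) = 0" by (simp add: psi_def)
    then obtain i where i: "i \<in> {1..N}" "1 - of_real (\<alpha> i) * z = 0" by (auto simp: prod_zero_iff)
    then have "z = 1 / of_real (\<alpha> i)" by (cases "\<alpha> i = 0") (auto simp: eq_divide_eq algebra_simps)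
    with i show "z \<in> (\<lambda>i. 1 / of_real (\<alpha> i)) ` {1..N}" by blast
  qed
qed simp

lemma psi_0: "psi \<alpha> N t (0::complex) = 1"
  by (simp add: psi_def)

lemma circ_transfer:
  fixes g :: "complex \<Rightarrow> complex" and Z :: "complex set"
  assumes Z: "finite Z" "0 \<notin> Z"
    and holo: "g holomorphic_on (- Z - {0})"
    and \<gamma>: "valid_path \<gamma>" "pathfinish \<gamma> = pathstart \<gamma>" "path_image \<gamma> \<subseteq> - Z - {0}"
    and wZ: "\<And>z. z \<in> Z \<Longrightarrow> winding_number \<gamma> z = 0" and w0: "winding_number \<gamma> 0 = 1"
    and r: "0 < r" "\<And>z. z \<in> Z \<Longrightarrow> r < norm z"
  shows "contour_integral \<gamma> g = contour_integral (circlepath 0 r) g"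
proof -
  have op: "open (- Z)" using Z by (simp add: finite_imp_closed open_Compl)
  have co: "connected (- Z)"
  proof -
    have "connected (UNIV - Z)"
      by (rule connected_open_diff_countable) (use Z in \<open>auto simp: countable_finite\<close>)
    then show ?thesis by (simp add: Compl_eq_Diff_UNIV)
  qed
  have "contour_integral \<gamma> g = 2 * pi * \<i> * (\<Sum>p\<in>{0}. winding_number \<gamma> p * residue g p)"
    by (rule Residue_theorem[OF op co _ holo \<gamma>]) (use wZ in auto)
  moreover have "contour_integral (circlepath 0 r) g = 2 * pi * \<i> * (\<Sum>p\<in>{0}. winding_number (circlepath 0 r) p * residue g p)"
  proof (rule Residue_theorem[OF op co _ holo])
    show "valid_path (circlepath 0 r)" by simp
    show "pathfinish (circlepath 0 r) = pathstart (circlepath 0 r)" by simp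
    show "path_image (circlepath 0 r) \<subseteq> - Z - {0}" using r by (auto; meson less_irrefl)
    show "\<forall>z. z \<notin> - Z \<longrightarrow> winding_number (circlepath 0 r) z = 0"
    proof (intro allI impI)
      fix z assume "z \<notin> - Z"
      then have "r < norm z" using r by auto
      then show "winding_number (circlepath 0 r) z = 0"
        by (intro winding_number_zero_outside[where s="cball 0 r"]) (use r in auto)
    qed
  qed simp
  ultimately show ?thesis using w0 r by (simp add: winding_number_circlepath_centre)
qed

lemma circ_pow:
  assumes r: "0 < r"
  shows "((\<lambda>u. (- u) ^ a / (- u) ^ Suc b) has_contour_integral (if a = b then - (2 * pi * \<i>) else 0)) (circlepath 0 r)"
proof (cases "b < a")
  case True
  have "((\<lambda>u. (- u) ^ (a - Suc b)) has_contour_integral 0) (circlepath 0 r)"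
    by (rule Cauchy_theorem_convex_simple[where S=UNIV]) (auto intro!: holomorphic_intros)
  moreover have "(- u) ^ (a - Suc b) = (- u) ^ a / (- u) ^ Suc b" if "u \<in> path_image (circlepath 0 r)" for u
  proof -
    have "u \<noteq> 0" using that r by auto
    then show ?thesis using True by (simp add: power_diff)
  qed
  ultimately show ?thesis using True by (auto intro: has_contour_integral_eq)
next
  case False
  define k where "k = b - a"
  have "((\<lambda>u. (- 1) ^ Suc k / (u - 0) ^ Suc k) has_contour_integral
      ((2 * pi * \<i>) / (fact k) * (deriv ^^ k) (\<lambda>u. (- 1) ^ Suc k) 0)) (circlepath 0 r)"
    by (rule Cauchy_has_contour_integral_higher_derivative_circlepath) (use r in auto)
  moreover have "(- 1) ^ Suc k / (u - 0) ^ Suc k = (- u) ^ a / (- u) ^ Suc b" if "u \<in> path_image (circlepath 0 r)" for u :: complex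
  proof -
    have u: "u \<noteq> 0" using that r by auto
    have b: "Suc b = Suc k + a" using False k_def by simp
    have "(- u) ^ a / (- u) ^ Suc b = 1 / (- u) ^ Suc k" unfolding b power_add using u by simp
    also have "\<dots> = (- 1) ^ Suc k / (u - 0) ^ Suc k"
      by (simp add: power_minus[of u] divide_simps)
    finally show ?thesis by simp
  qed
  ultimately have "((\<lambda>u. (- u) ^ a / (- u) ^ Suc b) has_contour_integral
      ((2 * pi * \<i>) / (fact k) * (deriv ^^ k) (\<lambda>u. (- 1) ^ Suc k) 0)) (circlepath 0 r)"
    by (auto intro: has_contour_integral_eq)
  moreover have "(2 * pi * \<i>) / (fact k) * (deriv ^^ k) (\<lambda>u. (- 1) ^ Suc k) (0::complex) = (if a = b then - (2 * pi * \<i>) else 0)"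
    using False k_def by auto
  ultimately show ?thesis by simp
qed




context bdc
begin

theorem core:
  fixes \<gamma> :: "real \<Rightarrow> complex"
  assumes t: "0 \<le> t"
    and \<gamma>: "valid_path \<gamma>" "pathfinish \<gamma> = pathstart \<gamma>" "0 \<notin> path_image \<gamma>"
    and w0: "winding_number \<gamma> 0 = 1"
    and zer: "\<And>z. psi \<alpha> N t z = (0::complex) \<Longrightarrow> z \<notin> path_image \<gamma> \<and> winding_number \<gamma> z = 0"
  shows "(\<lambda>i. complex_of_real (\<integral>x. bd_pi lam mu i * bdQ lam mu i x * (- x) ^ a * psi \<alpha> N t x \<partial>m)
            * (- (1 / (2 * of_real pi * \<i>)) *
               cint \<gamma> (\<lambda>u. bdQ lam mu i u / (psi \<alpha> N t u * (- u) ^ Suc b))))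
         sums (if a = b then 1 else 0)"
proof -
  define Z where "Z = {z::complex. psi \<alpha> N t z = 0}"
  define Psi where "Psi i = (\<integral>x. bd_pi lam mu i * bdQ lam mu i x * (- x) ^ a * psi \<alpha> N t x \<partial>m)" for i
  define phi where "phi u = 1 / (psi \<alpha> N t u * (- u) ^ Suc b)" for u :: complex
  have Zf: "finite Z" unfolding Z_def by (rule psi_zeros_finite)
  have Z0: "0 \<notin> Z" unfolding Z_def by (simp add: psi_0)
  obtain r where r: "0 < r" "\<And>z. z \<in> Z \<Longrightarrow> r < norm z"
  proof -
    define r where "r = Min (insert 1 (norm ` Z)) / 2"
    have "0 < Min (insert 1 (norm ` Z))" using Zf Z0 by (subst Min_gr_iff) auto
    then have "0 < r" unfolding r_def by simp
    moreover have "r < norm z" if "z \<in> Z" for z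
    proof -
      have "Min (insert 1 (norm ` Z)) \<le> norm z" using Zf that by (intro Min_le) auto
      moreover have "0 < norm z" using that Z0 by auto
      ultimately show ?thesis unfolding r_def by linarith
    qed
    ultimately show ?thesis using that by blast
  qed
  have lam0: "\<And>i. lam i \<noteq> 0" using lam less_imp_neq by (metis less_numeral_extra(3))
  have holo: "(\<lambda>u. bdQ lam mu i u / (psi \<alpha> N t u * (- u) ^ Suc b)) holomorphic_on (- Z - {0})" for i
    by (intro holomorphic_intros bdQ_holo[OF lam0] psi_holo) (auto simp: Z_def)
  have op: "open (- Z - {0})" using Zf by (auto intro!: open_Diff finite_imp_closed simp: open_Compl)
  have pimg: "path_image \<gamma> \<subseteq> - Z - {0}" using zer \<gamma>(3) by (auto simp: Z_def)
  have sph: "sphere 0 r \<subseteq> - Z - {0}" using r by (auto; meson less_irrefl)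
  have pc: "path_image (circlepath 0 r) \<subseteq> - Z - {0}" using sph r(1) by (simp add: path_image_circlepath abs_of_pos)
  have cint_circ: "cint \<gamma> (\<lambda>u. bdQ lam mu i u / (psi \<alpha> N t u * (- u) ^ Suc b))
      = contour_integral (circlepath 0 r) (\<lambda>u. bdQ lam mu i u / (psi \<alpha> N t u * (- u) ^ Suc b))" for i
  proof -
    have "cint \<gamma> (\<lambda>u. bdQ lam mu i u / (psi \<alpha> N t u * (- u) ^ Suc b))
        = contour_integral \<gamma> (\<lambda>u. bdQ lam mu i u / (psi \<alpha> N t u * (- u) ^ Suc b))"
      by (intro cint_eq has_contour_integral_integral contour_integrable_holomorphic_simple[OF holo op \<gamma>(1) pimg])
    also have "\<dots> = contour_integral (circlepath 0 r) (\<lambda>u. bdQ lam mu i u / (psi \<alpha> N t u * (- u) ^ Suc b))"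
      by (rule circ_transfer[OF Zf Z0 holo \<gamma>(1,2) pimg _ w0 r]) (use zer in \<open>auto simp: Z_def\<close>)
    finally show ?thesis .
  qed
  define F where "F M u = (\<Sum>i<M. complex_of_real (Psi i) * bdQ lam mu i u) * phi u" for M u
  have cint_circ_int: "(\<lambda>u. bdQ lam mu i u / (psi \<alpha> N t u * (- u) ^ Suc b)) contour_integrable_on (circlepath 0 r)" for i
    by (rule contour_integrable_holomorphic_simple[OF holo op]) (use pc in auto)
  have psum: "(\<Sum>i<M. complex_of_real (Psi i) * (- (1 / (2 * of_real pi * \<i>)) *
               cint \<gamma> (\<lambda>u. bdQ lam mu i u / (psi \<alpha> N t u * (- u) ^ Suc b))))
      = - (1 / (2 * of_real pi * \<i>)) * contour_integral (circlepath 0 r) (F M)" for M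
  proof -
    have "contour_integral (circlepath 0 r) (F M)
        = contour_integral (circlepath 0 r) (\<lambda>u. \<Sum>i<M. complex_of_real (Psi i) * (bdQ lam mu i u / (psi \<alpha> N t u * (- u) ^ Suc b)))"
      unfolding F_def phi_def sum_distrib_right
      by (intro arg_cong[where f="contour_integral (circlepath 0 r)"] ext sum.cong refl) simp
    also have "\<dots> = (\<Sum>i<M. complex_of_real (Psi i) * contour_integral (circlepath 0 r) (\<lambda>u. bdQ lam mu i u / (psi \<alpha> N t u * (- u) ^ Suc b)))"
    proof -
      have "contour_integral (circlepath 0 r) (\<lambda>u. \<Sum>i<M. complex_of_real (Psi i) * (bdQ lam mu i u / (psi \<alpha> N t u * (- u) ^ Suc b)))
        = (\<Sum>i<M. contour_integral (circlepath 0 r) (\<lambda>u. complex_of_real (Psi i) * (bdQ lam mu i u / (psi \<alpha> N t u * (- u) ^ Suc b))))"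
        by (rule contour_integral_sum) (intro finite_lessThan contour_integrable_lmul cint_circ_int)+
      also have "\<dots> = (\<Sum>i<M. complex_of_real (Psi i) * contour_integral (circlepath 0 r) (\<lambda>u. bdQ lam mu i u / (psi \<alpha> N t u * (- u) ^ Suc b)))"
        by (intro sum.cong refl contour_integral_lmul cint_circ_int)
      finally show ?thesis .
    qed
    finally show ?thesis unfolding cint_circ by (simp add: sum_distrib_left mult_ac)
  qed
  define G where "G u = (- u) ^ a * psi \<alpha> N t u * phi u" for u
  obtain K where K: "\<And>u. u \<in> sphere 0 r \<Longrightarrow> norm (phi u) \<le> K"
  proof -
    have "continuous_on (sphere 0 r) phi"
      unfolding phi_def by (intro continuous_intros holomorphic_on_imp_continuous_on[OF psi_holo]) (use sph in \<open>auto simp: Z_def\<close>)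
    then have "bounded (phi ` sphere 0 r)" by (intro compact_imp_bounded compact_continuous_image) auto
    then obtain B where "\<forall>x\<in>sphere 0 r. norm (phi x) \<le> B" by (auto simp: bounded_iff)
    then show ?thesis using that by blast
  qed
  have "norm (phi (of_real r)) \<le> K" by (rule K) (use r in simp)
  then have K0: "0 \<le> K" using norm_ge_zero order_trans by blast
  have unif: "uniform_limit (sphere 0 r) F G sequentially"
  proof (rule uniform_limitI)
    fix e :: real assume e: "0 < e"
    have "\<forall>\<^sub>F M in sequentially. beta \<alpha> N t a r M < e / (K + 1)"
      by (rule order_tendstoD(2)[OF beta_lim]) (use e K0 in simp)
    then show "\<forall>\<^sub>F M in sequentially. \<forall>u\<in>sphere 0 r. dist (F M u) (G u) < e"
    proof (rule eventually_mono)
      fix M assume M: "beta \<alpha> N t a r M < e / (K + 1)"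
      show "\<forall>u\<in>sphere 0 r. dist (F M u) (G u) < e"
      proof
        fix u :: complex assume u: "u \<in> sphere 0 r"
        have "dist (F M u) (G u) = norm ((\<Sum>i<M. complex_of_real (Psi i) * bdQ lam mu i u) - (- u) ^ a * psi \<alpha> N t u) * norm (phi u)"
          unfolding F_def G_def dist_norm by (simp add: left_diff_distrib[symmetric] norm_mult)
        also have "\<dots> \<le> beta \<alpha> N t a r M * K"
        proof -
          have a1: "norm ((\<Sum>i<M. complex_of_real (Psi i) * bdQ lam mu i u) - (- u) ^ a * psi \<alpha> N t u) \<le> beta \<alpha> N t a r M"
            unfolding Psi_def by (rule approx[OF t]) (use u in simp)
          have b0: "0 \<le> beta \<alpha> N t a r M" using a1 norm_ge_zero order_trans by blast
          show ?thesis by (rule mult_mono[OF a1 K[OF u] b0 norm_ge_zero])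
        qed
        also have "\<dots> \<le> e / (K + 1) * K" using M K0 by (intro mult_right_mono) auto
        also have "\<dots> < e"
        proof -
          have "e / (K + 1) * K = e * (K / (K + 1))" by simp
          also have "\<dots> < e * 1" using e K0 by (intro mult_strict_left_mono) auto
          finally show ?thesis by simp
        qed
        finally show "dist (F M u) (G u) < e" .
      qed
    qed
  qed
  have lim: "(\<lambda>M. contour_integral (circlepath 0 r) (F M)) \<longlonglongrightarrow> contour_integral (circlepath 0 r) G"
  proof (rule contour_integral_uniform_limit_circlepath(2)[OF _ unif _ r(1)])
    show "\<forall>\<^sub>F n in sequentially. F n contour_integrable_on circlepath 0 r"
      unfolding F_def phi_def
      by (intro always_eventually allI contour_integrable_holomorphic_simple[OF _ op])
         (use pc in \<open>auto intro!: holomorphic_intros bdQ_holo[OF lam0] psi_holo simp: Z_def\<close>)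
  qed simp
  have Gint: "contour_integral (circlepath 0 r) G = (if a = b then - (2 * pi * \<i>) else 0)"
  proof (rule contour_integral_unique, rule has_contour_integral_eq[OF circ_pow[OF r(1)]])
    fix u assume "u \<in> path_image (circlepath 0 r)"
    then have "psi \<alpha> N t u \<noteq> 0" "u \<noteq> 0" using pc by (auto simp: Z_def)
    then show "(- u) ^ a / (- u) ^ Suc b = G u" unfolding G_def phi_def by (simp add: field_simps)
  qed
  have "(\<lambda>M. \<Sum>i<M. complex_of_real (Psi i) * (- (1 / (2 * of_real pi * \<i>)) *
               cint \<gamma> (\<lambda>u. bdQ lam mu i u / (psi \<alpha> N t u * (- u) ^ Suc b))))
       \<longlonglongrightarrow> - (1 / (2 * of_real pi * \<i>)) * contour_integral (circlepath 0 r) G"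
    unfolding psum by (intro tendsto_mult tendsto_const lim)
  moreover have "- (1 / (2 * of_real pi * \<i>)) * contour_integral (circlepath 0 r) G = (if a = b then 1 else 0)"
    unfolding Gint by simp
  ultimately show ?thesis unfolding sums_def Psi_def by simp
qed

end




lemma msupport_nonempty:
  assumes P: "prob_space M" and S: "sets M = sets borel"
  shows "msupport M \<noteq> {}"
proof
  assume e: "msupport M = {}"
  have sp: "space M = UNIV" using sets_eq_imp_space_eq[OF S] by simp
  have "\<exists>r>0. emeasure M (ball x r) = 0" for x
  proof -
    have "x \<notin> msupport M" using e by simp
    then obtain r where "r > 0" "\<not> emeasure M (ball x r) > 0" unfolding msupport_def by auto
    then show ?thesis by (auto simp: not_less)
  qed
  then obtain R where R: "\<And>x. R x > 0" "\<And>x. emeasure M (ball x (R x)) = 0" by metis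
  have bs: "ball x r \<in> sets M" for x r using S by simp
  have null: "emeasure M (cball 0 (real n)) = 0" for n
  proof -
    have cpt: "compact (cball (0::real) (real n))" by simp
    have cover: "cball 0 (real n) \<subseteq> (\<Union>c\<in>cball 0 (real n). ball c (R c))" using R(1) by force
    obtain D where D: "D \<subseteq> cball 0 (real n)" "finite D" "cball 0 (real n) \<subseteq> (\<Union>c\<in>D. ball c (R c))"
    proof (rule compactE_image[OF cpt _ cover])
    qed auto
    have "emeasure M (cball 0 (real n)) \<le> emeasure M (\<Union>c\<in>D. ball c (R c))"
      by (rule emeasure_mono[OF D(3)]) (use D(2) bs in auto)
    also have "\<dots> \<le> (\<Sum>c\<in>D. emeasure M (ball c (R c)))"
      by (rule emeasure_subadditive_finite[OF D(2)]) (use bs in auto)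
    also have "\<dots> = 0" using R(2) by simp
    finally show ?thesis by simp
  qed
  have "emeasure M (\<Union>n. cball 0 (real n)) = 0"
    by (rule emeasure_UN_eq_0) (use null S in auto)
  moreover have "(\<Union>n. cball (0::real) (real n)) = UNIV"
    by (auto simp: dist_real_def) (metis real_arch_simple)
  ultimately have "emeasure M (space M) = 0" using sp by simp
  then show False using prob_space.emeasure_space_1[OF P] by simp
qed

lemma msupport_nonneg:
  assumes S: "sets M = sets borel" and AE: "AE x in M. 0 \<le> x" and x: "x \<in> msupport M"
  shows "0 \<le> x"
proof (rule ccontr)
  assume "\<not> 0 \<le> x"
  then have xn: "x < 0" by simp
  have sp: "space M = UNIV" using sets_eq_imp_space_eq[OF S] by simp
  have n0: "emeasure M {y \<in> space M. \<not> 0 \<le> y} = 0"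
    using AE by (subst (asm) AE_iff_measurable[OF _ refl]) (use S in auto)
  have sub: "ball x (- x) \<subseteq> {y \<in> space M. \<not> 0 \<le> y}"
    using sp by (auto simp: dist_real_def)
  have "{y \<in> space M. \<not> 0 \<le> y} = {..<0::real}" using sp by auto
  then have meas: "{y \<in> space M. \<not> 0 \<le> y} \<in> sets M" using S by simp
  have "emeasure M (ball x (- x)) = 0" by (rule emeasure_eq_0[OF meas n0 sub])
  moreover have "emeasure M (ball x (- x)) > 0" using x xn unfolding msupport_def by auto
  ultimately show False by simp
qed

theorem lemma10p2:
  fixes lam mu :: "nat \<Rightarrow> real" and w w_hat :: "real measure"
    and alpha :: "nat \<Rightarrow> real" and N :: nat and t :: real
    and \<gamma> :: "real \<Rightarrow> complex"
  assumes lam_pos: "\<And>k. lam k > 0"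
    and mu0: "mu 0 = 0"
    and mu_pos: "\<And>k. k \<ge> 1 \<Longrightarrow> mu k > 0"
    and div1: "(\<Sum>j. ennreal (1 / (lam j * bd_pi lam mu j)) *
                   ennreal (\<Sum>i\<le>j. bd_pi lam mu i)) = \<infinity>"
    and div2: "(\<Sum>j. ennreal (1 / (lam j * bd_pi lam mu j)) *
                   (\<Sum>i. if j < i then ennreal (bd_pi lam mu i) else 0)) = \<infinity>"
    and w_orth: "orth_measure lam mu w"
    and w_unique: "\<And>m. orth_measure lam mu m \<Longrightarrow> m = w"
    and wh_orth: "orth_measure (dual_lam lam mu) (dual_mu lam mu) w_hat"
    and wh_unique: "\<And>m. orth_measure (dual_lam lam mu) (dual_mu lam mu) m \<Longrightarrow> m = w_hat"
    and compact_supp: "compact (msupport w)"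
    and C_fin: "bdd_above (range (\<lambda>i. lam i + mu i))"
    and Ch_fin: "bdd_above (range (\<lambda>i. dual_lam lam mu i + dual_mu lam mu i))"
    and alpha_top: "N \<ge> 1 \<Longrightarrow> alpha 1 \<le> min (1 / (SUP i. lam i + mu i))
                                          (1 / (SUP i. dual_lam lam mu i + dual_mu lam mu i)) / 2"
    and alpha_mono: "\<And>i j. 1 \<le> i \<Longrightarrow> i \<le> j \<Longrightarrow> j \<le> N \<Longrightarrow> alpha j \<le> alpha i"
    and alpha_nonneg: "\<And>i. 1 \<le> i \<Longrightarrow> i \<le> N \<Longrightarrow> 0 \<le> alpha i"
    and t_nonneg: "t \<ge> 0"
    and contour: "pos_simple_closed_contour \<gamma>"
    and encl: "\<And>x. 0 \<le> x \<Longrightarrow> x \<le> Sup (msupport w) \<Longrightarrow> complex_of_real x \<in> inside (path_image \<gamma>)"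
    and no_zero: "\<And>z. psi alpha N t z = (0::complex) \<Longrightarrow>
                     z \<notin> inside (path_image \<gamma>) \<and> z \<notin> path_image \<gamma>"
  shows
    "(\<forall>n k l. 1 \<le> k \<and> k \<le> n + 1 \<and> 1 \<le> l \<and> l \<le> n + 1 \<longrightarrow>
       (\<lambda>i. complex_of_real
              (\<integral>x. bd_pi lam mu i * bdQ lam mu i x * (- x) ^ (n + 1 - k) * psi alpha N t x \<partial>w)
            * (- (1 / (2 * of_real pi * \<i>)) *
               cint \<gamma> (\<lambda>u. bdQ lam mu i u / (psi alpha N t u * (- u) ^ (n + 2 - l)))))
       sums (if k = l then 1 else 0))
   \<and> (\<forall>n k l. 1 \<le> n \<and> 1 \<le> k \<and> k \<le> n \<and> 1 \<le> l \<and> l \<le> n \<longrightarrow>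
       (\<lambda>i. complex_of_real
              (\<integral>x. bd_pi (dual_lam lam mu) (dual_mu lam mu) i
                    * bdQ (dual_lam lam mu) (dual_mu lam mu) i x * (- x) ^ (n - k)
                    * psi alpha N t x \<partial>w_hat)
            * (- (1 / (2 * of_real pi * \<i>)) *
               cint \<gamma> (\<lambda>u. bdQ (dual_lam lam mu) (dual_mu lam mu) i u
                              / (psi alpha N t u * (- u) ^ (n - l + 1)))))
       sums (if k = l then 1 else 0))"
proof -
  define C where "C = (SUP i. lam i + mu i)"
  define Ch where "Ch = (SUP i. dual_lam lam mu i + dual_mu lam mu i)"
  have mu_nn: "\<And>i. mu i \<ge> 0"
  proof -
    fix i show "mu i \<ge> 0" using mu0 mu_pos[of i] by (cases i) auto
  qed
  interpret P: bdc lam mu w C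
  proof
    show "\<And>i. 0 < lam i" by (rule lam_pos)
    show "\<And>i. 0 \<le> mu i" by (rule mu_nn)
    show "\<And>i. 1 \<le> i \<Longrightarrow> 0 < mu i" by (rule mu_pos)
    show "\<And>i. lam i + mu i \<le> C" unfolding C_def by (rule cSUP_upper[OF _ C_fin]) simp
    show "orth_measure lam mu w" by (rule w_orth)
  qed
  interpret D: bdc "dual_lam lam mu" "dual_mu lam mu" w_hat Ch
  proof
    show "\<And>i. 0 < dual_lam lam mu i" unfolding dual_lam_def by (rule mu_pos) simp
    show "\<And>i. 0 \<le> dual_mu lam mu i" unfolding dual_mu_def using lam_pos less_imp_le by blast
    show "\<And>i. 1 \<le> i \<Longrightarrow> 0 < dual_mu lam mu i" unfolding dual_mu_def by (rule lam_pos)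
    show "\<And>i. dual_lam lam mu i + dual_mu lam mu i \<le> Ch" unfolding Ch_def by (rule cSUP_upper[OF _ Ch_fin]) simp
    show "orth_measure (dual_lam lam mu) (dual_mu lam mu) w_hat" by (rule wh_orth)
  qed
  have vp: "valid_path \<gamma>" and cl: "pathfinish \<gamma> = pathstart \<gamma>" and sp: "simple_path \<gamma>"
    and wi: "\<And>z. z \<in> inside (path_image \<gamma>) \<Longrightarrow> cint \<gamma> (\<lambda>w. 1 / (w - z)) = 2 * of_real pi * \<i>"
    using contour unfolding pos_simple_closed_contour_def by auto
  have pth: "path \<gamma>" by (rule valid_path_imp_path[OF vp])
  have "0 \<le> Sup (msupport w)"
  proof -
    have pw: "prob_space w" "sets w = sets borel" "AE x in w. 0 \<le> x"
      using w_orth unfolding orth_measure_def by auto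
    obtain x where x: "x \<in> msupport w" using msupport_nonempty[OF pw(1,2)] by blast
    have "0 \<le> x" by (rule msupport_nonneg[OF pw(2,3) x])
    also have "x \<le> Sup (msupport w)"
      by (rule cSup_upper[OF x]) (use compact_supp in \<open>auto intro: bounded_imp_bdd_above compact_imp_bounded\<close>)
    finally show ?thesis .
  qed
  then have in0: "(0::complex) \<in> inside (path_image \<gamma>)" using encl[of 0] by simp
  have np0: "(0::complex) \<notin> path_image \<gamma>" using in0 inside_no_overlap by blast
  have w0: "winding_number \<gamma> 0 = 1"
  proof -
    have "((\<lambda>w. 1 / (w - 0)) has_contour_integral contour_integral \<gamma> (\<lambda>w. 1 / (w - 0))) \<gamma>"
      by (rule has_contour_integral_integral[OF contour_integrable_inversediff[OF vp np0]])
    then have "contour_integral \<gamma> (\<lambda>w. 1 / (w - 0)) = 2 * of_real pi * \<i>"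
      using wi[OF in0] cint_eq by metis
    then show ?thesis using winding_number_valid_path[OF vp np0] by simp
  qed
  have zer: "\<And>z. psi alpha N t z = (0::complex) \<Longrightarrow> z \<notin> path_image \<gamma> \<and> winding_number \<gamma> z = 0"
  proof -
    fix z :: complex assume "psi alpha N t z = 0"
    then have z: "z \<notin> inside (path_image \<gamma>)" "z \<notin> path_image \<gamma>" using no_zero by auto
    then have "z \<in> outside (path_image \<gamma>)" by (simp add: outside_inside)
    then show "z \<notin> path_image \<gamma> \<and> winding_number \<gamma> z = 0"
      using z winding_number_zero_in_outside[OF pth cl] by blast
  qed
  show ?thesis
  proof (intro conjI allI impI)
    fix n k l :: nat
    assume kl: "1 \<le> k \<and> k \<le> n + 1 \<and> 1 \<le> l \<and> l \<le> n + 1"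
    have e1: "n + 2 - l = Suc (n + 1 - l)" using kl by (simp add: Suc_diff_le)
    have e2: "(k = l) = (n + 1 - k = n + 1 - l)" using kl by auto
    show "(\<lambda>i. complex_of_real
              (\<integral>x. bd_pi lam mu i * bdQ lam mu i x * (- x) ^ (n + 1 - k) * psi alpha N t x \<partial>w)
            * (- (1 / (2 * of_real pi * \<i>)) *
               cint \<gamma> (\<lambda>u. bdQ lam mu i u / (psi alpha N t u * (- u) ^ (n + 2 - l)))))
       sums (if k = l then 1 else 0)"
      unfolding e1 e2 by (rule P.core[OF t_nonneg vp cl np0 w0 zer])
  next
    fix n k l :: nat
    assume kl: "1 \<le> n \<and> 1 \<le> k \<and> k \<le> n \<and> 1 \<le> l \<and> l \<le> n"
    have e1: "n - l + 1 = Suc (n - l)" by simp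
    have e2: "(k = l) = (n - k = n - l)" using kl by auto
    show "(\<lambda>i. complex_of_real
              (\<integral>x. bd_pi (dual_lam lam mu) (dual_mu lam mu) i
                    * bdQ (dual_lam lam mu) (dual_mu lam mu) i x * (- x) ^ (n - k)
                    * psi alpha N t x \<partial>w_hat)
            * (- (1 / (2 * of_real pi * \<i>)) *
               cint \<gamma> (\<lambda>u. bdQ (dual_lam lam mu) (dual_mu lam mu) i u
                              / (psi alpha N t u * (- u) ^ (n - l + 1)))))
       sums (if k = l then 1 else 0)"
      unfolding e1 e2 by (rule D.core[OF t_nonneg vp cl np0 w0 zer])
  qed
qed


end
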